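(* Let $\mathcal{C}_7=\{0,2,8,12,20,22,28,30,40,42,48,50,58,62,68\}$. Every pair of primes $(3t-2,3t+2)$ with $t$ an odd integer and $3t-2\geq 103$ is of the form $(3s-2,3s+2)$ with $s=5\cdot 7(2n+1)+c$ for some integer $n\geq 0$ and some $c\in\mathcal{C}_7$. *)

theory Defs
  imports "HOL-Computational_Algebra.Primes"
begin

definition C7 :: "int set" where
  "C7 = {0,2,8,12,20,22,28,30,40,42,48,50,58,62,68}"

end

theory Submission
  imports Defs
begin

lemma crt: "2 dvd m \<Longrightarrow> 5 dvd m \<Longrightarrow> 7 dvd m \<Longrightarrow> 70 dvd (m::int)"
proof -
  assume "2 dvd m" "5 dvd m" "7 dvd m"
  then obtain a b c where "m = 2*a" "m = 5*b" "m = 7*c" by (meson dvdE)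
  then have "m = 70*a - 70*b - 140*c" by linarith
  then have "m = 70*(a - b - 2*c)" by (simp add: algebra_simps)
  then show ?thesis by simp
qed
lemma key:
  fixes t a b c :: int
  assumes "odd t" "t mod 5 = a" "t mod 7 = b" "(a - 35 - c) mod 5 = 0" "(b - 35 - c) mod 7 = 0"
    "even c" "0 \<le> c" "c < 70"
  shows "(t - 35) mod 70 = c"
proof -
  have "70 dvd (t - 35 - c)"
  proof (rule crt)
    show "2 dvd (t-35-c)" using assms(1,6) by simp
    have "(t-35-c) mod 5 = (a-35-c) mod 5" using assms(2) by (metis mod_diff_left_eq)
    then show "5 dvd (t-35-c)" using assms(4) by auto
    have "(t-35-c) mod 7 = (b-35-c) mod 7" using assms(3) by (metis mod_diff_left_eq)
    then show "7 dvd (t-35-c)" using assms(5) by auto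
  qed
  then obtain k where "t - 35 - c = 70*k" by blast
  then have "t - 35 = c + 70 * k" by simp
  then show ?thesis using assms(7,8) by simp
qed
lemma m5: fixes t::int assumes "\<not> 5 dvd (3*t-2)" "\<not> 5 dvd (3*t+2)" shows "t mod 5 \<in> {0,2,3}"
proof -
  define r where "r = t mod 5"
  have e: "(3*t-2) mod 5 = (3*r-2) mod 5" "(3*t+2) mod 5 = (3*r+2) mod 5"
    unfolding r_def by (metis mod_diff_left_eq mod_mult_right_eq, metis mod_add_left_eq mod_mult_right_eq)
  have a: "(3*r-2) mod 5 \<noteq> 0" "(3*r+2) mod 5 \<noteq> 0"
    using assms e by (simp_all add: dvd_eq_mod_eq_0)
  have b: "0 \<le> r" "r < 5" unfolding r_def by simp_all
  have "r \<noteq> 1" using a(2) by (rule contrapos_nn) simp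
  moreover have "r \<noteq> 4" using a(1) by (rule contrapos_nn) simp
  ultimately have "r = 0 \<or> r = 2 \<or> r = 3" using b by linarith
  then show ?thesis unfolding r_def by blast
qed

lemma m7: fixes t::int assumes "\<not> 7 dvd (3*t-2)" "\<not> 7 dvd (3*t+2)" shows "t mod 7 \<in> {0,1,2,5,6}"
proof -
  define r where "r = t mod 7"
  have e: "(3*t-2) mod 7 = (3*r-2) mod 7" "(3*t+2) mod 7 = (3*r+2) mod 7"
    unfolding r_def by (metis mod_diff_left_eq mod_mult_right_eq, metis mod_add_left_eq mod_mult_right_eq)
  have a: "(3*r-2) mod 7 \<noteq> 0" "(3*r+2) mod 7 \<noteq> 0"
    using assms e by (simp_all add: dvd_eq_mod_eq_0)
  have b: "0 \<le> r" "r < 7" unfolding r_def by simp_all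
  have "r \<noteq> 3" using a(1) by (rule contrapos_nn) simp
  moreover have "r \<noteq> 4" using a(2) by (rule contrapos_nn) simp
  ultimately have "r = 0 \<or> r = 1 \<or> r = 2 \<or> r = 5 \<or> r = 6" using b by linarith
  then show ?thesis unfolding r_def by blast
qed

lemma keyC:
  fixes t a b c :: int
  assumes "odd t" "t mod 5 = a" "t mod 7 = b" "(a - 35 - c) mod 5 = 0" "(b - 35 - c) mod 7 = 0"
    "even c" "0 \<le> c" "c < 70" "c \<in> C7"
  shows "(t - 35) mod 70 \<in> C7"
  using key[OF assms(1-8)] assms(9) by simp

lemma resid:
  fixes t :: int
  assumes "odd t" "\<not> 5 dvd (3*t-2)" "\<not> 5 dvd (3*t+2)" "\<not> 7 dvd (3*t-2)" "\<not> 7 dvd (3*t+2)"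
  shows "(t - 35) mod 70 \<in> C7"
proof -
  have h5: "t mod 5 \<in> {0,2,3}" using m5 assms(2,3) .
  have h7: "t mod 7 \<in> {0,1,2,5,6}" using m7 assms(4,5) .
  have "t mod 5 = 0 \<or> t mod 5 = 2 \<or> t mod 5 = 3" using h5 by simp
  moreover have "t mod 7 = 0 \<or> t mod 7 = 1 \<or> t mod 7 = 2 \<or> t mod 7 = 5 \<or> t mod 7 = 6" using h7 by simp
  moreover have "t mod 5 = 0 \<Longrightarrow> t mod 7 = 0 \<Longrightarrow> ?thesis"
    by (rule keyC[OF assms(1), of 0 0 0]) (simp_all add: C7_def)
  moreover have "t mod 5 = 0 \<Longrightarrow> t mod 7 = 1 \<Longrightarrow> ?thesis"
    by (rule keyC[OF assms(1), of 0 1 50]) (simp_all add: C7_def)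
  moreover have "t mod 5 = 0 \<Longrightarrow> t mod 7 = 2 \<Longrightarrow> ?thesis"
    by (rule keyC[OF assms(1), of 0 2 30]) (simp_all add: C7_def)
  moreover have "t mod 5 = 0 \<Longrightarrow> t mod 7 = 5 \<Longrightarrow> ?thesis"
    by (rule keyC[OF assms(1), of 0 5 40]) (simp_all add: C7_def)
  moreover have "t mod 5 = 0 \<Longrightarrow> t mod 7 = 6 \<Longrightarrow> ?thesis"
    by (rule keyC[OF assms(1), of 0 6 20]) (simp_all add: C7_def)
  moreover have "t mod 5 = 2 \<Longrightarrow> t mod 7 = 0 \<Longrightarrow> ?thesis"
    by (rule keyC[OF assms(1), of 2 0 42]) (simp_all add: C7_def)
  moreover have "t mod 5 = 2 \<Longrightarrow> t mod 7 = 1 \<Longrightarrow> ?thesis"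
    by (rule keyC[OF assms(1), of 2 1 22]) (simp_all add: C7_def)
  moreover have "t mod 5 = 2 \<Longrightarrow> t mod 7 = 2 \<Longrightarrow> ?thesis"
    by (rule keyC[OF assms(1), of 2 2 2]) (simp_all add: C7_def)
  moreover have "t mod 5 = 2 \<Longrightarrow> t mod 7 = 5 \<Longrightarrow> ?thesis"
    by (rule keyC[OF assms(1), of 2 5 12]) (simp_all add: C7_def)
  moreover have "t mod 5 = 2 \<Longrightarrow> t mod 7 = 6 \<Longrightarrow> ?thesis"
    by (rule keyC[OF assms(1), of 2 6 62]) (simp_all add: C7_def)
  moreover have "t mod 5 = 3 \<Longrightarrow> t mod 7 = 0 \<Longrightarrow> ?thesis"
    by (rule keyC[OF assms(1), of 3 0 28]) (simp_all add: C7_def)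
  moreover have "t mod 5 = 3 \<Longrightarrow> t mod 7 = 1 \<Longrightarrow> ?thesis"
    by (rule keyC[OF assms(1), of 3 1 8]) (simp_all add: C7_def)
  moreover have "t mod 5 = 3 \<Longrightarrow> t mod 7 = 2 \<Longrightarrow> ?thesis"
    by (rule keyC[OF assms(1), of 3 2 58]) (simp_all add: C7_def)
  moreover have "t mod 5 = 3 \<Longrightarrow> t mod 7 = 5 \<Longrightarrow> ?thesis"
    by (rule keyC[OF assms(1), of 3 5 68]) (simp_all add: C7_def)
  moreover have "t mod 5 = 3 \<Longrightarrow> t mod 7 = 6 \<Longrightarrow> ?thesis"
    by (rule keyC[OF assms(1), of 3 6 48]) (simp_all add: C7_def)
  ultimately show ?thesis by meson
qed

theorem proposition3p5:
  fixes t :: int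
  assumes "odd t" and "prime (3*t - 2)" and "prime (3*t + 2)" and "3*t - 2 \<ge> 103"
  shows "\<exists>s n c. (3*t - 2, 3*t + 2) = (3*s - 2, 3*s + 2) \<and>
                 s = 5 * 7 * (2*n + 1) + c \<and> n \<ge> 0 \<and> c \<in> C7"
proof -
  have nd: "\<not> p dvd q" if "prime q" "q \<ge> 103" "p = 5 \<or> p = 7" for p q :: int
  proof
    assume "p dvd q"
    have "0 \<le> p" using that(3) by auto
    then have "p = 1 \<or> p = q" using \<open>p dvd q\<close> that(1) prime_int_iff by blast
    then show False using that by auto
  qed
  have c: "(t - 35) mod 70 \<in> C7"
    by (rule resid) (use assms nd in auto)
  have "t - 35 = 70 * ((t - 35) div 70) + (t - 35) mod 70" by simp
  moreover have "(t - 35) div 70 \<ge> 0" using assms(4) by simp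
  ultimately show ?thesis using c
    by (intro exI[of _ t] exI[of _ "(t-35) div 70"] exI[of _ "(t - 35) mod 70"]) auto
qed

end
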